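(* For every $\mathrm{PastCTL}_\pm$ formula $\varphi$ over a set $AP$ of atomic propositions there is a two-way linear $\mathrm{HTA}_\pm$ $\mathcal{A}_\varphi$ over $\Sigma=2^{AP}$ such that $\mathcal{L}(\varphi)=\mathcal{L}(\mathcal{A}_\varphi)$.
   Context: Fix a finite set $AP$, $\Sigma=2^{AP}$. A $\Sigma$-tree is an unranked (finitely many children per node), unordered, leafless (every node has a child) tree with labelling $t(v)\in\Sigma$. $\mathrm{PastCTL}_\pm$ formulae: $\varphi ::= p\mid\neg\varphi\mid\varphi\lor\varphi\mid\mathsf{D}^n\varphi\mid\mathsf{E}\mathsf{X}\varphi\mid\mathsf{E}(\varphi\,\mathsf{U}\,\varphi)\mid\mathsf{E}\mathsf{Y}\varphi\mid\mathsf{E}(\varphi\,\mathsf{S}\,\varphi)$, evaluated at a node $u$: $p$ iff $p\in t(u)$; Booleans as usual; $\mathsf{D}^n\varphi$ iff $u$ has at least $n$ distinct children satisfying $\varphi$; $\mathsf{E}\mathsf{X}\varphi$ iff some child of $u$ satisfies $\varphi$; $\mathsf{E}(\varphi_1\mathsf{U}\varphi_2)$ iff there is a downward path $u=v_0,\dots,v_j$ with $v_j\models\varphi_2$ and $v_k\models\varphi_1$ for $k<j$; $\mathsf{E}\mathsf{Y}\varphi$ iff $u$ is not the root and its parent satisfies $\varphi$; $\mathsf{E}(\varphi_1\mathsf{S}\varphi_2)$ iff for some $j\ge0$ the ancestors $w_0=u$, $w_{k+1}=$ parent of $w_k$ exist up to $w_j$, $w_j\models\varphi_2$ and $w_k\models\varphi_1$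 for $k<j$. $\mathcal{L}(\varphi)$ is the set of trees whose root satisfies $\varphi$. A two-way $\mathrm{HTA}_\pm$ is $\mathcal{A}=\langle Q,\Sigma,\delta,q_I,F\rangle$ with $Q$ finite, $q_I\in Q$, $F\subseteq Q$, $\delta:Q\times\Sigma\times\{\mathit{root},\mathit{nonroot}\}\to\mathcal{B}^+(\{\Diamond_k,\Box_k\}_{k\in\mathbb{N}}\times Q\cup\{\Uparrow\}\times Q)$ (positive Boolean formulae over these atoms, built with $\top,\bot,\land,\lor$); $\Diamond=\Diamond_1,\Box=\Box_1$. A run on $t$ from $s$ is a tree $r$ labelled by $Q\times\mathrm{Dom}(t)$, root labelled $(q_I,s)$, each node $x$ labelled $(q,v)$ satisfying $\delta(q,t(v),\rho)$ ($\rho=\mathit{root}$ iff $v$ is the root), where $x\models(\Diamond_k,q')$ iff $x$ has children labelled $(q',v_1),\dots,(q',v_k)$ for pairwise distinct children $v_i$ of $v$; $x\models(\Box_k,q')$ iff for all but at most $k-1$ children $v'$ of $v$, $x$ has a child labelled $(q',v')$; $x\models(\Uparrow,q')$ iff $x$ has a child labelled $(q',v')$ with $v'$ the parent of $v$. Accepting: every infinite path of $r$ from its root has infinitely many nodes with state in $F$. $\mathcal{L}(\mathcal{A})$: trees with an accepting run from the root. Hesitant: a partition of $Q$ into nonempty components, totally ordered so that transitions from $Q_i$ only mention states of components $Q_j$ with $j\le i$, each component being of exactly one type: transient (no atom with state in $Q_i$ occurs in $\delta(q,\sigma,\rho)$ for $q\in Q_i$); existential ($Q_i$-atoms in such transitions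 are of form $(\Diamond,q')$, at most one per DNF clause); universal ($Q_i$-atoms of form $(\Box,q')$, at most one per CNF clause); upward (singleton $\{q\}$ with $q$ occurring in $\delta(q,\sigma,\rho)$ only as $(\Uparrow,q)$). Polarised: existential-component states not in $F$, universal-component states in $F$. Linear: all components are singletons. *)

theory Defs
  imports Main
begin

text \<open>Nodes are lists of naturals; the children of node v are the nodes i # v with
  i < br t v; the root is []; the parent of i # v is v. Labels are sets of atomic
  propositions (Sigma = 2^AP, AP = the finite type 'ap).\<close>

record 'ap tree =
  br  :: "nat list \<Rightarrow> nat"
  lab :: "nat list \<Rightarrow> 'ap set"

fun in_dom :: "'ap tree \<Rightarrow> nat list \<Rightarrow> bool" where
  "in_dom t [] = True"
| "in_dom t (i # v) = (in_dom t v \<and> i < br t v)"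

definition children :: "'ap tree \<Rightarrow> nat list \<Rightarrow> nat list set" where
  "children t v = {i # v | i. i < br t v}"

definition is_tree :: "'ap tree \<Rightarrow> bool" where
  "is_tree t \<longleftrightarrow> (\<forall>v. in_dom t v \<longrightarrow> br t v \<ge> 1)"

datatype 'ap pctl =
    Atom 'ap
  | Neg "'ap pctl"
  | Or "'ap pctl" "'ap pctl"
  | Dn nat "'ap pctl"
  | EXn "'ap pctl"
  | EUn "'ap pctl" "'ap pctl"
  | EYn "'ap pctl"
  | ESn "'ap pctl" "'ap pctl"

fun sat :: "'ap tree \<Rightarrow> nat list \<Rightarrow> 'ap pctl \<Rightarrow> bool" where
  "sat t u (Atom p) = (p \<in> lab t u)"
| "sat t u (Neg \<phi>) = (\<not> sat t u \<phi>)"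
| "sat t u (Or \<phi> \<psi>) = (sat t u \<phi> \<or> sat t u \<psi>)"
| "sat t u (Dn n \<phi>) = (card {c \<in> children t u. sat t c \<phi>} \<ge> n)"
| "sat t u (EXn \<phi>) = (\<exists>c \<in> children t u. sat t c \<phi>)"
| "sat t u (EUn \<phi> \<psi>) =
     (\<exists>(j::nat) (f::nat \<Rightarrow> nat list). f 0 = u \<and> (\<forall>k<j. f (Suc k) \<in> children t (f k))
        \<and> sat t (f j) \<psi> \<and> (\<forall>k<j. sat t (f k) \<phi>))"
| "sat t u (EYn \<phi>) = (u \<noteq> [] \<and> sat t (tl u) \<phi>)"
| "sat t u (ESn \<phi> \<psi>) =
     (\<exists>j \<le> length u. sat t (drop j u) \<psi> \<and> (\<forall>k<j. sat t (drop k u) \<phi>))"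

definition ctl_lang :: "'ap pctl \<Rightarrow> 'ap tree set" where
  "ctl_lang \<phi> = {t. is_tree t \<and> sat t [] \<phi>}"

datatype 'a pbf = PTrue | PFalse | PAtom 'a | PAnd "'a pbf" "'a pbf" | POr "'a pbf" "'a pbf"

fun eval_pbf :: "('a \<Rightarrow> bool) \<Rightarrow> 'a pbf \<Rightarrow> bool" where
  "eval_pbf I PTrue = True"
| "eval_pbf I PFalse = False"
| "eval_pbf I (PAtom a) = I a"
| "eval_pbf I (PAnd a b) = (eval_pbf I a \<and> eval_pbf I b)"
| "eval_pbf I (POr a b) = (eval_pbf I a \<or> eval_pbf I b)"

fun atoms :: "'a pbf \<Rightarrow> 'a set" where
  "atoms PTrue = {}"
| "atoms PFalse = {}"
| "atoms (PAtom a) = {a}"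
| "atoms (PAnd a b) = atoms a \<union> atoms b"
| "atoms (POr a b) = atoms a \<union> atoms b"

fun dnf :: "'a pbf \<Rightarrow> 'a list list" where
  "dnf PTrue = [[]]"
| "dnf PFalse = []"
| "dnf (PAtom a) = [[a]]"
| "dnf (POr a b) = dnf a @ dnf b"
| "dnf (PAnd a b) = [c1 @ c2. c1 \<leftarrow> dnf a, c2 \<leftarrow> dnf b]"

fun cnf :: "'a pbf \<Rightarrow> 'a list list" where
  "cnf PTrue = []"
| "cnf PFalse = [[]]"
| "cnf (PAtom a) = [[a]]"
| "cnf (PAnd a b) = cnf a @ cnf b"
| "cnf (POr a b) = [c1 @ c2. c1 \<leftarrow> cnf a, c2 \<leftarrow> cnf b]"

datatype 'q atom = Dia nat 'q | Box nat 'q | Up 'q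

fun atom_state :: "'q atom \<Rightarrow> 'q" where
  "atom_state (Dia k q) = q"
| "atom_state (Box k q) = q"
| "atom_state (Up q) = q"

text \<open>States are natural numbers; the state set is the finite set states.
  The Boolean argument of delta is True iff the node is the root.\<close>
record 'ap hta =
  states :: "nat set"
  delta  :: "nat \<Rightarrow> 'ap set \<Rightarrow> bool \<Rightarrow> nat atom pbf"
  init   :: nat
  acc    :: "nat set"

definition hta_wf :: "'ap hta \<Rightarrow> bool" where
  "hta_wf A \<longleftrightarrow> finite (states A) \<and> init A \<in> states A \<and> acc A \<subseteq> states A"

text \<open>Run trees: node set R of nat lists, closed under taking the parent (tl),
  containing the root []; labelling rl x = (state, tree node).\<close>
definition rchildren :: "nat list set \<Rightarrow> nat list \<Rightarrow> nat list set" where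
  "rchildren R x = {y \<in> R. \<exists>i. y = i # x}"

fun atom_holds :: "'ap tree \<Rightarrow> nat list set \<Rightarrow> (nat list \<Rightarrow> nat \<times> nat list)
    \<Rightarrow> nat list \<Rightarrow> nat atom \<Rightarrow> bool" where
  "atom_holds t R rl x (Dia k q') =
     (\<exists>S \<subseteq> children t (snd (rl x)). card S = k \<and>
        (\<forall>v' \<in> S. \<exists>y \<in> rchildren R x. rl y = (q', v')))"
| "atom_holds t R rl x (Box k q') =
     (card {v' \<in> children t (snd (rl x)). \<not> (\<exists>y \<in> rchildren R x. rl y = (q', v'))} < k)"
| "atom_holds t R rl x (Up q') =
     (snd (rl x) \<noteq> [] \<and> (\<exists>y \<in> rchildren R x. rl y = (q', tl (snd (rl x)))))"

definition is_run :: "'ap hta \<Rightarrow> 'ap tree \<Rightarrow> nat list \<Rightarrow> nat list set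
    \<Rightarrow> (nat list \<Rightarrow> nat \<times> nat list) \<Rightarrow> bool" where
  "is_run A t s R rl \<longleftrightarrow>
     [] \<in> R \<and> (\<forall>i x. i # x \<in> R \<longrightarrow> x \<in> R) \<and> rl [] = (init A, s) \<and>
     (\<forall>x \<in> R. fst (rl x) \<in> states A \<and> in_dom t (snd (rl x)) \<and>
        eval_pbf (atom_holds t R rl x)
          (delta A (fst (rl x)) (lab t (snd (rl x))) (snd (rl x) = [])))"

definition accepting :: "'ap hta \<Rightarrow> nat list set \<Rightarrow> (nat list \<Rightarrow> nat \<times> nat list) \<Rightarrow> bool" where
  "accepting A R rl \<longleftrightarrow>
     (\<forall>p::nat \<Rightarrow> nat list. p 0 = [] \<and> (\<forall>n. p (Suc n) \<in> rchildren R (p n)) \<longrightarrow>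
        (\<exists>\<^sub>\<infinity>n. fst (rl (p n)) \<in> acc A))"

definition hta_lang :: "'ap hta \<Rightarrow> 'ap tree set" where
  "hta_lang A = {t. is_tree t \<and> (\<exists>R rl. is_run A t [] R rl \<and> accepting A R rl)}"

datatype ctype = Transient | Existential | Universal | Upward

definition hesitant_wrt :: "'ap hta \<Rightarrow> nat set list \<Rightarrow> ctype list \<Rightarrow> bool" where
  "hesitant_wrt A comps tys \<longleftrightarrow>
     length tys = length comps \<and>
     (\<forall>C \<in> set comps. C \<noteq> {}) \<and>
     \<Union> (set comps) = states A \<and>
     (\<forall>i < length comps. \<forall>j < length comps. i \<noteq> j \<longrightarrow> comps ! i \<inter> comps ! j = {}) \<and>
     (\<forall>i < length comps. \<forall>q \<in> comps ! i. \<forall>\<sigma> \<rho>.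
        let \<phi> = delta A q \<sigma> \<rho>; inC = (\<lambda>a. atom_state a \<in> comps ! i) in
        (\<forall>a \<in> atoms \<phi>. \<exists>j \<le> i. atom_state a \<in> comps ! j) \<and>
        (case tys ! i of
           Transient \<Rightarrow> (\<forall>a \<in> atoms \<phi>. \<not> inC a)
         | Existential \<Rightarrow> (\<forall>a \<in> atoms \<phi>. inC a \<longrightarrow> (\<exists>q'. a = Dia 1 q')) \<and>
                          (\<forall>cl \<in> set (dnf \<phi>). card {a \<in> set cl. inC a} \<le> 1)
         | Universal \<Rightarrow> (\<forall>a \<in> atoms \<phi>. inC a \<longrightarrow> (\<exists>q'. a = Box 1 q')) \<and>
                          (\<forall>cl \<in> set (cnf \<phi>). card {a \<in> set cl. inC a} \<le> 1)
         | Upward \<Rightarrow> comps ! i = {q} \<and> (\<forall>a \<in> atoms \<phi>. inC a \<longrightarrow> a = Up q)))"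

definition linear_hesitant :: "'ap hta \<Rightarrow> bool" where
  "linear_hesitant A \<longleftrightarrow>
     (\<exists>comps tys. hesitant_wrt A comps tys \<and> (\<forall>C \<in> set comps. \<exists>q. C = {q}))"

end

theory Submission
  imports Defs "HOL-Library.Countable" "HOL-Library.Infinite_Set"
begin

instance pctl :: (countable) countable by countable_datatype

definition st :: "bool \<Rightarrow> 'ap::countable pctl \<Rightarrow> nat" where
  "st b \<psi> = to_nat (b, \<psi>)"

lemma st_inj[simp]: "st b \<psi> = st b' \<psi>' \<longleftrightarrow> b = b' \<and> \<psi> = \<psi>'"
  unfolding st_def by auto

lemma from_st[simp]: "from_nat (st b \<psi>) = (b, \<psi>)"
  unfolding st_def by simp

fun tr :: "bool \<Rightarrow> 'ap::countable pctl \<Rightarrow> 'ap set \<Rightarrow> bool \<Rightarrow> nat atom pbf" where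
  "tr b (Atom p) \<sigma> r = (if (p \<in> \<sigma>) = b then PTrue else PFalse)"
| "tr b (Neg a) \<sigma> r = tr (\<not> b) a \<sigma> r"
| "tr b (Or a c) \<sigma> r = (if b then POr (tr True a \<sigma> r) (tr True c \<sigma> r)
      else PAnd (tr False a \<sigma> r) (tr False c \<sigma> r))"
| "tr b (Dn n a) \<sigma> r = (if b then PAtom (Dia n (st True a)) else PAtom (Box n (st False a)))"
| "tr b (EXn a) \<sigma> r = (if b then PAtom (Dia 1 (st True a)) else PAtom (Box 1 (st False a)))"
| "tr b (EUn a c) \<sigma> r = (if b then POr (tr True c \<sigma> r) (PAnd (tr True a \<sigma> r) (PAtom (Dia 1 (st True (EUn a c)))))
      else PAnd (tr False c \<sigma> r) (POr (tr False a \<sigma> r) (PAtom (Box 1 (st False (EUn a c))))))"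
| "tr b (EYn a) \<sigma> r = (if r then (if b then PFalse else PTrue) else PAtom (Up (st b a)))"
| "tr b (ESn a c) \<sigma> r = (if b then POr (tr True c \<sigma> r) (if r then PFalse else PAnd (tr True a \<sigma> r) (PAtom (Up (st True (ESn a c)))))
      else PAnd (tr False c \<sigma> r) (if r then PTrue else POr (tr False a \<sigma> r) (PAtom (Up (st False (ESn a c))))))"

fun subs :: "'ap pctl \<Rightarrow> 'ap pctl set" where
  "subs (Atom p) = {Atom p}"
| "subs (Neg a) = insert (Neg a) (subs a)"
| "subs (Or a c) = insert (Or a c) (subs a \<union> subs c)"
| "subs (Dn n a) = insert (Dn n a) (subs a)"
| "subs (EXn a) = insert (EXn a) (subs a)"
| "subs (EUn a c) = insert (EUn a c) (subs a \<union> subs c)"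
| "subs (EYn a) = insert (EYn a) (subs a)"
| "subs (ESn a c) = insert (ESn a c) (subs a \<union> subs c)"

lemma subs_self[simp]: "\<psi> \<in> subs \<psi>"
  by (cases \<psi>) auto

lemma subs_trans: "\<psi>' \<in> subs \<psi> \<Longrightarrow> \<psi>'' \<in> subs \<psi>' \<Longrightarrow> \<psi>'' \<in> subs \<psi>"
  by (induction \<psi>) auto

lemma finite_subs[simp]: "finite (subs \<psi>)"
  by (induction \<psi>) auto

lemma subs_size: "\<psi>' \<in> subs \<psi> \<Longrightarrow> size \<psi>' \<le> size \<psi>"
  by (induction \<psi>) auto

fun selfatom :: "bool \<Rightarrow> 'ap::countable pctl \<Rightarrow> nat atom \<Rightarrow> bool" where
  "selfatom b (EUn a c) x = (x = (if b then Dia 1 (st b (EUn a c)) else Box 1 (st b (EUn a c))))"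
| "selfatom b (ESn a c) x = (x = Up (st b (ESn a c)))"
| "selfatom b _ x = False"

lemma selfatom_state: "selfatom b \<psi> x \<Longrightarrow> atom_state x = st b \<psi>"
  by (cases \<psi>) auto

lemma atoms_tr_weak: "x \<in> atoms (tr b \<psi> \<sigma> r) \<Longrightarrow>
   (\<exists>b' \<psi>'. atom_state x = st b' \<psi>' \<and> \<psi>' \<in> subs \<psi>)"
  apply (induction \<psi> arbitrary: b)
  apply (simp_all split: if_splits)
  apply (fastforce+)
  done

lemma atoms_tr: "x \<in> atoms (tr b \<psi> \<sigma> r) \<Longrightarrow> selfatom b \<psi> x \<or>
   (\<exists>b' \<psi>'. atom_state x = st b' \<psi>' \<and> \<psi>' \<in> subs \<psi> \<and> size \<psi>' < size \<psi>)"
  by (cases \<psi>; simp split: if_splits; ((elim disjE)?; ((drule atoms_tr_weak)?;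
     (elim exE conjE)?; (frule subs_size)?; fastforce)))


definition Sts :: "'ap::countable pctl \<Rightarrow> nat set" where
  "Sts \<phi> = (\<lambda>(b,\<psi>). st b \<psi>) ` (UNIV \<times> subs \<phi>)"

definition dlt :: "nat \<Rightarrow> 'ap::countable set \<Rightarrow> bool \<Rightarrow> nat atom pbf" where
  "dlt q \<sigma> r = (case (from_nat q :: bool \<times> 'ap pctl) of (b, \<psi>) \<Rightarrow> tr b \<psi> \<sigma> r)"

lemma dlt_st[simp]: "dlt (st b \<psi>) \<sigma> r = tr b \<psi> \<sigma> r"
  unfolding dlt_def by simp

fun isEU :: "'ap pctl \<Rightarrow> bool" where
  "isEU (EUn a c) = True"
| "isEU _ = False"

definition Acc :: "'ap::countable pctl \<Rightarrow> nat set" where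
  "Acc \<phi> = {q \<in> Sts \<phi>. \<not> fst (from_nat q :: bool \<times> 'ap pctl) \<and> isEU (snd (from_nat q :: bool \<times> 'ap pctl))}"

definition Aut :: "'ap::countable pctl \<Rightarrow> 'ap hta" where
  "Aut \<phi> = \<lparr>states = Sts \<phi>, delta = dlt, init = st True \<phi>, acc = Acc \<phi>\<rparr>"

definition msz :: "'ap::countable pctl \<Rightarrow> nat \<Rightarrow> nat" where
  "msz \<phi> q = size (snd (from_nat q :: bool \<times> 'ap pctl))"

definition tyq :: "'ap::countable pctl \<Rightarrow> nat \<Rightarrow> ctype" where
  "tyq \<phi> q = (case (from_nat q :: bool \<times> 'ap pctl) of
      (b, EUn a c) \<Rightarrow> (if b then Existential else Universal)
    | (b, ESn a c) \<Rightarrow> Upward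
    | _ \<Rightarrow> Transient)"

lemma finite_Sts[simp]: "finite (Sts \<phi>)"
  unfolding Sts_def by simp

lemma st_in_Sts[simp]: "st b \<psi> \<in> Sts \<phi> \<longleftrightarrow> \<psi> \<in> subs \<phi>"
  unfolding Sts_def by auto

lemma Sts_dec: "q \<in> Sts \<phi> \<Longrightarrow> \<exists>b \<psi>. q = st b \<psi> \<and> \<psi> \<in> subs \<phi>"
  unfolding Sts_def by auto

lemma hta_wf_Aut: "hta_wf (Aut \<phi>)"
  unfolding hta_wf_def Aut_def Acc_def by auto

lemma dnf_atoms: "cl \<in> set (dnf f) \<Longrightarrow> set cl \<subseteq> atoms f"
  by (induction f arbitrary: cl) fastforce+

lemma cnf_atoms: "cl \<in> set (cnf f) \<Longrightarrow> set cl \<subseteq> atoms f"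
  by (induction f arbitrary: cl) fastforce+

lemma atoms_dlt:
  fixes \<phi> \<psi> :: "'ap::countable pctl" and \<sigma> :: "'ap set"
  assumes "\<psi> \<in> subs \<phi>" "x \<in> atoms (dlt (st b \<psi>) \<sigma> r)"
  shows "atom_state x \<in> Sts \<phi> \<and> (atom_state x = st b \<psi> \<longleftrightarrow> selfatom b \<psi> x) \<and>
     (atom_state x \<noteq> st b \<psi> \<longrightarrow> msz \<phi> (atom_state x) < size \<psi>)"
proof -
  have x: "x \<in> atoms (tr b \<psi> \<sigma> r)" using assms(2) by simp
  from atoms_tr[OF x] show ?thesis
  proof
    assume "selfatom b \<psi> x"
    then show ?thesis using selfatom_state assms(1) by fastforce
  next
    assume "\<exists>b' \<psi>'. atom_state x = st b' \<psi>' \<and> \<psi>' \<in> subs \<psi> \<and> size \<psi>' < size \<psi>"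
    then obtain b' \<psi>' where h: "atom_state x = st b' \<psi>'" "\<psi>' \<in> subs \<psi>" "size \<psi>' < size \<psi>" by blast
    have ns: "\<not> selfatom b \<psi> x"
      using selfatom_state h by fastforce
    show ?thesis using h ns subs_trans[OF assms(1) h(2)] by (auto simp: msz_def)
  qed
qed

lemma hes: "linear_hesitant (Aut \<phi>)"
proof -
  define L where "L = sort_key (msz \<phi>) (sorted_list_of_set (Sts \<phi>))"
  have setL: "set L = Sts \<phi>" and dL: "distinct L" and sL: "sorted (map (msz \<phi>) L)"
    unfolding L_def by auto
  have H: "hesitant_wrt (Aut \<phi>) (map (\<lambda>q. {q}) L) (map (tyq \<phi>) L)"
    unfolding hesitant_wrt_def
  proof (intro conjI allI ballI impI)
    show "\<Union> (set (map (\<lambda>q. {q}) L)) = states (Aut \<phi>)"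
      using setL by (auto simp: Aut_def)
  next
    fix i j assume "i < length (map (\<lambda>q. {q}) L)" "j < length (map (\<lambda>q. {q}) L)" "i \<noteq> j"
    then show "map (\<lambda>q. {q}) L ! i \<inter> map (\<lambda>q. {q}) L ! j = {}"
      using dL by (auto simp: nth_eq_iff_index_eq)
  next
    fix i q \<sigma> \<rho>
    assume i: "i < length (map (\<lambda>q. {q}) L)" and q: "q \<in> map (\<lambda>q. {q}) L ! i"
    have qi: "q = L ! i" using i q by simp
    have "q \<in> Sts \<phi>" using qi i setL by auto
    then obtain b \<psi> where bq: "q = st b \<psi>" and sub: "\<psi> \<in> subs \<phi>" using Sts_dec by blast
    have dq: "delta (Aut \<phi>) q \<sigma> \<rho> = dlt (st b \<psi>) \<sigma> \<rho>" by (simp add: Aut_def bq)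
    have A1: "\<forall>a \<in> atoms (dlt (st b \<psi>) \<sigma> \<rho>). \<exists>j \<le> i. atom_state a \<in> map (\<lambda>q. {q}) L ! j"
    proof
      fix a assume a: "a \<in> atoms (dlt (st b \<psi>) \<sigma> \<rho>)"
      note ad = atoms_dlt[OF sub a]
      then obtain j where j: "j < length L" "atom_state a = L ! j"
        using setL by (metis in_set_conv_nth)
      have "j \<le> i"
      proof (cases "atom_state a = q")
        case True
        then show ?thesis using j i qi dL by (simp add: nth_eq_iff_index_eq)
      next
        case False
        have "msz \<phi> q = size \<psi>" by (simp add: bq msz_def)
        then have "msz \<phi> (L ! j) < msz \<phi> (L ! i)"
          using ad j qi bq False by simp
        moreover have "i < j \<Longrightarrow> msz \<phi> (L ! i) \<le> msz \<phi> (L ! j)"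
          using sorted_nth_mono[OF sL, of i j] j by simp
        ultimately show ?thesis by linarith
      qed
      then show "\<exists>j \<le> i. atom_state a \<in> map (\<lambda>q. {q}) L ! j" using j by auto
    qed
    have inC: "\<And>a. a \<in> atoms (dlt (st b \<psi>) \<sigma> \<rho>) \<Longrightarrow> (atom_state a \<in> map (\<lambda>q. {q}) L ! i) = selfatom b \<psi> a"
    proof -
      fix a assume "a \<in> atoms (dlt (st b \<psi>) \<sigma> \<rho>)"
      then have "(atom_state a = st b \<psi>) = selfatom b \<psi> a" using atoms_dlt[OF sub] by blast
      moreover have "map (\<lambda>q. {q}) L ! i = {st b \<psi>}" using i qi bq by simp
      ultimately show "(atom_state a \<in> map (\<lambda>q. {q}) L ! i) = selfatom b \<psi> a" by simp
    qed
    have ty: "map (tyq \<phi>) L ! i = tyq \<phi> (st b \<psi>)" using i qi bq by simp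
    have card1: "\<And>cl z. set cl \<subseteq> atoms (dlt (st b \<psi>) \<sigma> \<rho>) \<Longrightarrow> (\<And>a. selfatom b \<psi> a \<Longrightarrow> a = z) \<Longrightarrow>
        card {a \<in> set cl. atom_state a \<in> map (\<lambda>q. {q}) L ! i} \<le> 1"
    proof -
      fix cl z assume h: "set cl \<subseteq> atoms (dlt (st b \<psi>) \<sigma> \<rho>)" "\<And>a. selfatom b \<psi> a \<Longrightarrow> a = z"
      have "{a \<in> set cl. atom_state a \<in> map (\<lambda>q. {q}) L ! i} \<subseteq> {z}"
        using h inC by auto
      then show "card {a \<in> set cl. atom_state a \<in> map (\<lambda>q. {q}) L ! i} \<le> 1"
        using card_mono[of "{z}"] by fastforce
    qed
    show "let \<phi>' = delta (Aut \<phi>) q \<sigma> \<rho>; inC = (\<lambda>a. atom_state a \<in> map (\<lambda>q. {q}) L ! i)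
       in (\<forall>a\<in>atoms \<phi>'. \<exists>j\<le>i. atom_state a \<in> map (\<lambda>q. {q}) L ! j) \<and>
          (case map (tyq \<phi>) L ! i of
             Transient \<Rightarrow> \<forall>a\<in>atoms \<phi>'. \<not> inC a
           | Existential \<Rightarrow> (\<forall>a\<in>atoms \<phi>'. inC a \<longrightarrow> (\<exists>q'. a = Dia 1 q')) \<and>
                 (\<forall>cl\<in>set (dnf \<phi>'). card {a \<in> set cl. inC a} \<le> 1)
           | Universal \<Rightarrow> (\<forall>a\<in>atoms \<phi>'. inC a \<longrightarrow> (\<exists>q'. a = Box 1 q')) \<and>
                 (\<forall>cl\<in>set (cnf \<phi>'). card {a \<in> set cl. inC a} \<le> 1)
           | Upward \<Rightarrow> map (\<lambda>q. {q}) L ! i = {q} \<and> (\<forall>a\<in>atoms \<phi>'. inC a \<longrightarrow> a = Up q))"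
      unfolding Let_def dq ty
    proof (intro conjI A1)
      show "case tyq \<phi> (st b \<psi>) of
             Transient \<Rightarrow> \<forall>a\<in>atoms (dlt (st b \<psi>) \<sigma> \<rho>). \<not> atom_state a \<in> map (\<lambda>q. {q}) L ! i
           | Existential \<Rightarrow> (\<forall>a\<in>atoms (dlt (st b \<psi>) \<sigma> \<rho>). atom_state a \<in> map (\<lambda>q. {q}) L ! i \<longrightarrow> (\<exists>q'. a = Dia 1 q')) \<and>
                 (\<forall>cl\<in>set (dnf (dlt (st b \<psi>) \<sigma> \<rho>)). card {a \<in> set cl. atom_state a \<in> map (\<lambda>q. {q}) L ! i} \<le> 1)
           | Universal \<Rightarrow> (\<forall>a\<in>atoms (dlt (st b \<psi>) \<sigma> \<rho>). atom_state a \<in> map (\<lambda>q. {q}) L ! i \<longrightarrow> (\<exists>q'. a = Box 1 q')) \<and>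
                 (\<forall>cl\<in>set (cnf (dlt (st b \<psi>) \<sigma> \<rho>)). card {a \<in> set cl. atom_state a \<in> map (\<lambda>q. {q}) L ! i} \<le> 1)
           | Upward \<Rightarrow> map (\<lambda>q. {q}) L ! i = {q} \<and> (\<forall>a\<in>atoms (dlt (st b \<psi>) \<sigma> \<rho>). atom_state a \<in> map (\<lambda>q. {q}) L ! i \<longrightarrow> a = Up q)"
      proof (cases \<psi>)
        case (EUn a c)
        show ?thesis
        proof (cases b)
          case True
          have t: "tyq \<phi> (st b \<psi>) = Existential" using EUn True by (simp add: tyq_def)
          have sa: "\<And>x. selfatom b \<psi> x \<Longrightarrow> x = Dia 1 (st b \<psi>)" using EUn True by simp
          show ?thesis unfolding t ctype.case
          proof (intro conjI ballI impI)
            fix x assume "x \<in> atoms (dlt (st b \<psi>) \<sigma> \<rho>)" "atom_state x \<in> map (\<lambda>q. {q}) L ! i"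
            then show "\<exists>q'. x = Dia 1 q'" using inC sa by blast
          next
            fix cl assume "cl \<in> set (dnf (dlt (st b \<psi>) \<sigma> \<rho>))"
            then show "card {a \<in> set cl. atom_state a \<in> map (\<lambda>q. {q}) L ! i} \<le> 1"
              using card1[OF dnf_atoms sa] by blast
          qed
        next
          case False
          have t: "tyq \<phi> (st b \<psi>) = Universal" using EUn False by (simp add: tyq_def)
          have sa: "\<And>x. selfatom b \<psi> x \<Longrightarrow> x = Box 1 (st b \<psi>)" using EUn False by simp
          show ?thesis unfolding t ctype.case
          proof (intro conjI ballI impI)
            fix x assume "x \<in> atoms (dlt (st b \<psi>) \<sigma> \<rho>)" "atom_state x \<in> map (\<lambda>q. {q}) L ! i"
            then show "\<exists>q'. x = Box 1 q'" using inC sa by blast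
          next
            fix cl assume "cl \<in> set (cnf (dlt (st b \<psi>) \<sigma> \<rho>))"
            then show "card {a \<in> set cl. atom_state a \<in> map (\<lambda>q. {q}) L ! i} \<le> 1"
              using card1[OF cnf_atoms sa] by blast
          qed
        qed
      next
        case (ESn a c)
        have t: "tyq \<phi> (st b \<psi>) = Upward" using ESn by (simp add: tyq_def)
        have sa: "\<And>x. selfatom b \<psi> x \<Longrightarrow> x = Up (st b \<psi>)" using ESn by simp
        have ci: "map (\<lambda>q. {q}) L ! i = {q}" using i qi by simp
        show ?thesis unfolding t ctype.case
          using inC sa ci bq by blast
      next
        case (Atom p)
        have t: "tyq \<phi> (st b \<psi>) = Transient" using Atom by (simp add: tyq_def)
        have sa: "\<And>x. \<not> selfatom b \<psi> x" using Atom by simp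
        show ?thesis unfolding t ctype.case using inC sa by blast
      next
        case (Neg p)
        have t: "tyq \<phi> (st b \<psi>) = Transient" using Neg by (simp add: tyq_def)
        have sa: "\<And>x. \<not> selfatom b \<psi> x" using Neg by simp
        show ?thesis unfolding t ctype.case using inC sa by blast
      next
        case (Or p p')
        have t: "tyq \<phi> (st b \<psi>) = Transient" using Or by (simp add: tyq_def)
        have sa: "\<And>x. \<not> selfatom b \<psi> x" using Or by simp
        show ?thesis unfolding t ctype.case using inC sa by blast
      next
        case (Dn n p)
        have t: "tyq \<phi> (st b \<psi>) = Transient" using Dn by (simp add: tyq_def)
        have sa: "\<And>x. \<not> selfatom b \<psi> x" using Dn by simp
        show ?thesis unfolding t ctype.case using inC sa by blast
      next
        case (EXn p)
        have t: "tyq \<phi> (st b \<psi>) = Transient" using EXn by (simp add: tyq_def)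
        have sa: "\<And>x. \<not> selfatom b \<psi> x" using EXn by simp
        show ?thesis unfolding t ctype.case using inC sa by blast
      next
        case (EYn p)
        have t: "tyq \<phi> (st b \<psi>) = Transient" using EYn by (simp add: tyq_def)
        have sa: "\<And>x. \<not> selfatom b \<psi> x" using EYn by simp
        show ?thesis unfolding t ctype.case using inC sa by blast
      qed
    qed
  qed (auto simp: L_def)
  then show ?thesis unfolding linear_hesitant_def by fastforce
qed


inductive euj :: "'ap tree \<Rightarrow> 'ap pctl \<Rightarrow> 'ap pctl \<Rightarrow> nat \<Rightarrow> nat list \<Rightarrow> bool"
  for t a c where
  euj0: "sat t v c \<Longrightarrow> euj t a c 0 v"
| eujS: "sat t v a \<Longrightarrow> v' \<in> children t v \<Longrightarrow> euj t a c j v' \<Longrightarrow> euj t a c (Suc j) v"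

lemma euj_sat: "euj t a c j u \<Longrightarrow> \<exists>f. f 0 = u \<and> (\<forall>k<j. f (Suc k) \<in> children t (f k))
    \<and> sat t (f j) c \<and> (\<forall>k<j. sat t (f k) a)"
proof (induction rule: euj.induct)
  case (euj0 v)
  then show ?case by (intro exI[of _ "\<lambda>_. v"]) auto
next
  case (eujS v v' j)
  then obtain f where f: "f 0 = v'" "\<forall>k<j. f (Suc k) \<in> children t (f k)"
    "sat t (f j) c" "\<forall>k<j. sat t (f k) a" by blast
  define g where "g = (\<lambda>k. if k = 0 then v else f (k - 1))"
  have "\<forall>k<Suc j. g (Suc k) \<in> children t (g k)"
  proof (intro allI impI)
    fix k assume "k < Suc j"
    then show "g (Suc k) \<in> children t (g k)"
      using f eujS by (cases k) (auto simp: g_def)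
  qed
  moreover have "\<forall>k<Suc j. sat t (g k) a"
  proof (intro allI impI)
    fix k assume "k < Suc j"
    then show "sat t (g k) a"
      using f eujS by (cases k) (auto simp: g_def)
  qed
  ultimately show ?case using f by (intro exI[of _ g]) (auto simp: g_def)
qed

lemma sat_euj: "f 0 = u \<Longrightarrow> (\<forall>k<j. f (Suc k) \<in> children t (f k)) \<Longrightarrow> sat t (f j) c
   \<Longrightarrow> (\<forall>k<j. sat t (f k) a) \<Longrightarrow> euj t a c j u"
proof (induction j arbitrary: u f)
  case 0
  then show ?case by (auto intro: euj0)
next
  case (Suc j)
  have "euj t a c j (f 1)"
    using Suc.prems by (intro Suc.IH[of "f \<circ> Suc"]) auto
  moreover have "f 1 \<in> children t u" "sat t u a" using Suc.prems by auto
  ultimately show ?case by (auto intro: eujS)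
qed

lemma sat_EU: "sat t u (EUn a c) \<longleftrightarrow> (\<exists>j. euj t a c j u)"
  using euj_sat sat_euj by (simp; metis)

lemma sat_EU_unfold: "sat t u (EUn a c) \<longleftrightarrow> sat t u c \<or> (sat t u a \<and> (\<exists>v'\<in>children t u. sat t v' (EUn a c)))"
  unfolding sat_EU by (auto intro: euj.intros elim: euj.cases)

lemma sat_ES: "sat t v (ESn a c) \<longleftrightarrow> sat t v c \<or> (v \<noteq> [] \<and> sat t v a \<and> sat t (tl v) (ESn a c))"
proof
  assume "sat t v (ESn a c)"
  then obtain j where j: "j \<le> length v" "sat t (drop j v) c" "\<forall>k<j. sat t (drop k v) a" by auto
  show "sat t v c \<or> (v \<noteq> [] \<and> sat t v a \<and> sat t (tl v) (ESn a c))"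
  proof (cases j)
    case 0
    then show ?thesis using j by simp
  next
    case (Suc j')
    have "v \<noteq> []" using j Suc by auto
    moreover have "sat t v a" using j(3)[rule_format, of 0] Suc by simp
    moreover have "sat t (tl v) (ESn a c)"
      using j Suc by (auto intro!: exI[of _ j'] simp: drop_Suc[symmetric] simp del: drop_Suc)
    ultimately show ?thesis by blast
  qed
next
  assume "sat t v c \<or> (v \<noteq> [] \<and> sat t v a \<and> sat t (tl v) (ESn a c))"
  then show "sat t v (ESn a c)"
  proof
    assume "sat t v c" then show ?thesis by (auto intro!: exI[of _ 0])
  next
    assume h: "v \<noteq> [] \<and> sat t v a \<and> sat t (tl v) (ESn a c)"
    then obtain j where j: "j \<le> length (tl v)" "sat t (drop j (tl v)) c" "\<forall>k<j. sat t (drop k (tl v)) a" by auto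
    have "\<forall>k<Suc j. sat t (drop k v) a"
    proof (intro allI impI)
      fix k assume "k < Suc j" then show "sat t (drop k v) a"
        using h j by (cases k) (auto simp: drop_Suc)
    qed
    moreover have "Suc j \<le> length v" using j h by (cases v) auto
    ultimately show ?thesis using j h
      by (auto intro!: exI[of _ "Suc j"] simp: drop_Suc)
  qed
qed



lemma finite_children[simp]: "finite (children t v)"
  unfolding children_def by (rule finite_subset[of _ "(\<lambda>i. i # v) ` {..<br t v}"]) auto

fun isES :: "'ap pctl \<Rightarrow> bool" where
  "isES (ESn a c) = True"
| "isES _ = False"

lemma card_lt1: "finite A \<Longrightarrow> card A < 1 \<Longrightarrow> A = {}"
  by auto

lemma complete_tr:
  fixes \<psi> :: "'ap::countable pctl"
  assumes IH0: "\<And>y b' \<psi>'. y \<in> rchildren R x \<Longrightarrow> fst (rl y) = st b' \<psi>' \<Longrightarrow> size \<psi>' < K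
      \<Longrightarrow> sat t (snd (rl y)) \<psi>' = b'"
  and v: "v = snd (rl x)"
  shows "size \<psi> < K \<or> (\<not> isEU \<psi> \<and> \<not> isES \<psi> \<and> size \<psi> \<le> K) \<Longrightarrow>
     eval_pbf (atom_holds t R rl x) (tr b \<psi> (lab t v) (v = [])) \<Longrightarrow> sat t v \<psi> = b"
proof (induction \<psi> arbitrary: b)
  have IH: "\<And>y b' \<psi>' v'. y \<in> rchildren R x \<Longrightarrow> rl y = (st b' \<psi>', v') \<Longrightarrow> size \<psi>' < K
      \<Longrightarrow> sat t v' \<psi>' = b'"
    using IH0 by (metis fst_conv snd_conv)
  {
  case (Atom p)
  then show ?case by (simp split: if_splits)
next
  case (Neg a)
  have "size a < K" using Neg.prems(1) by auto
  then show ?case using Neg.IH[of "\<not> b"] Neg.prems(2) by simp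
next
  case (Or a c)
  have "size a < K" "size c < K" using Or.prems(1) by auto
  then show ?case using Or.IH(1)[of b] Or.IH(2)[of b] Or.prems(2) by (cases b) auto
next
  case (Dn n a)
  show ?case
  proof (cases b)
    case True
    then obtain S where S: "S \<subseteq> children t v" "card S = n"
      "\<forall>v'\<in>S. \<exists>y\<in>rchildren R x. rl y = (st True a, v')"
      using Dn v by auto
    have Ka: "size a < K" using Dn.prems(1) by auto
    have "S \<subseteq> {c \<in> children t v. sat t c a}"
    proof
      fix v' assume "v' \<in> S"
      then obtain y where "y \<in> rchildren R x" "rl y = (st True a, v')" using S by blast
      then show "v' \<in> {c \<in> children t v. sat t c a}" using IH Ka S(1) \<open>v' \<in> S\<close> by blast
    qed
    then have "n \<le> card {c \<in> children t v. sat t c a}"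
      using S(2) card_mono[of "{c \<in> children t v. sat t c a}" S] by simp
    then show ?thesis using True by simp
  next
    case False
    then have c: "card {v' \<in> children t v. \<not> (\<exists>y\<in>rchildren R x. rl y = (st False a, v'))} < n"
      using Dn v by auto
    have "{c \<in> children t v. sat t c a} \<subseteq> {v' \<in> children t v. \<not> (\<exists>y\<in>rchildren R x. rl y = (st False a, v'))}"
    proof
      have Ka: "size a < K" using Dn.prems(1) by auto
      fix v' assume v': "v' \<in> {c \<in> children t v. sat t c a}"
      have "\<not> (\<exists>y\<in>rchildren R x. rl y = (st False a, v'))"
        using IH[of _ False a v'] Ka v' by auto
      then show "v' \<in> {v' \<in> children t v. \<not> (\<exists>y\<in>rchildren R x. rl y = (st False a, v'))}" using v' by blast
    qed
    moreover have "finite {v' \<in> children t v. \<not> (\<exists>y\<in>rchildren R x. rl y = (st False a, v'))}"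
      by (rule finite_subset[OF _ finite_children[of t v]]) blast
    ultimately have "card {c \<in> children t v. sat t c a} \<le> card {v' \<in> children t v. \<not> (\<exists>y\<in>rchildren R x. rl y = (st False a, v'))}"
      by (intro card_mono)
    then have "card {c \<in> children t v. sat t c a} < n" using c by linarith
    then show ?thesis using False by simp
  qed
next
  case (EXn a)
  show ?case
  proof (cases b)
    case True
    then obtain S where S: "S \<subseteq> children t v" "card S = 1"
      "\<forall>v'\<in>S. \<exists>y\<in>rchildren R x. rl y = (st True a, v')"
      using EXn v by auto
    then obtain v' where "S = {v'}" by (meson card_1_singletonE)
    moreover have Ka: "size a < K" using EXn.prems(1) by auto
    ultimately show ?thesis using S IH[of _ True a v'] True by auto
  next
    case False
    then have c: "card {v' \<in> children t v. \<not> (\<exists>y\<in>rchildren R x. rl y = (st False a, v'))} < 1"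
      using EXn v by auto
    then have "{v' \<in> children t v. \<not> (\<exists>y\<in>rchildren R x. rl y = (st False a, v'))} = {}"
      by (intro card_lt1) auto
    moreover have Ka: "size a < K" using EXn.prems(1) by auto
    ultimately have "\<forall>v'\<in>children t v. \<not> sat t v' a" using IH[of _ False a] by blast
    then show ?thesis using False by simp
  qed
next
  case (EUn a c)
  have K: "size (EUn a c) < K" using EUn.prems(1) by simp
  show ?case
  proof (cases b)
    case True
    then have "eval_pbf (atom_holds t R rl x) (tr True c (lab t v) (v = [])) \<or>
       (eval_pbf (atom_holds t R rl x) (tr True a (lab t v) (v = [])) \<and>
        (\<exists>S \<subseteq> children t v. card S = 1 \<and> (\<forall>v'\<in>S. \<exists>y\<in>rchildren R x. rl y = (st True (EUn a c), v'))))"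
      using EUn.prems(2) v by simp
    then show ?thesis
    proof
      assume "eval_pbf (atom_holds t R rl x) (tr True c (lab t v) (v = []))"
      then have "sat t v c" using EUn.IH(2)[of True] K by simp
      then show ?thesis using True sat_EU_unfold[of t v a c] by blast
    next
      assume h: "eval_pbf (atom_holds t R rl x) (tr True a (lab t v) (v = [])) \<and>
        (\<exists>S \<subseteq> children t v. card S = 1 \<and> (\<forall>v'\<in>S. \<exists>y\<in>rchildren R x. rl y = (st True (EUn a c), v')))"
      then have "sat t v a" using EUn.IH(1)[of True] K by simp
      moreover obtain S where S: "S \<subseteq> children t v" "card S = 1"
        "\<forall>v'\<in>S. \<exists>y\<in>rchildren R x. rl y = (st True (EUn a c), v')" using h by blast
      then obtain v' where "S = {v'}" by (meson card_1_singletonE)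
      then have "v' \<in> children t v" "sat t v' (EUn a c)" using S IH[of _ True "EUn a c" v'] K by auto
      ultimately show ?thesis using True sat_EU_unfold[of t v a c] by blast
    qed
  next
    case False
    then have h: "eval_pbf (atom_holds t R rl x) (tr False c (lab t v) (v = [])) \<and>
       (eval_pbf (atom_holds t R rl x) (tr False a (lab t v) (v = [])) \<or>
        card {v' \<in> children t v. \<not> (\<exists>y\<in>rchildren R x. rl y = (st False (EUn a c), v'))} < 1)"
      using EUn.prems(2) v by simp
    then have "\<not> sat t v c" using EUn.IH(2)[of False] K by simp
    moreover have "\<not> sat t v a \<or> (\<forall>v'\<in>children t v. \<not> sat t v' (EUn a c))"
    proof (cases "eval_pbf (atom_holds t R rl x) (tr False a (lab t v) (v = []))")
      case True
      then show ?thesis using EUn.IH(1)[of False] K by simp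
    next
      case False
      then have "{v' \<in> children t v. \<not> (\<exists>y\<in>rchildren R x. rl y = (st False (EUn a c), v'))} = {}"
        using h by (intro card_lt1) auto
      then show ?thesis using IH[of _ False "EUn a c"] K by blast
    qed
    ultimately show ?thesis using False sat_EU_unfold[of t v a c] by blast
  qed
next
  case (EYn a)
  show ?case
  proof (cases "v = []")
    case True
    then show ?thesis using EYn.prems by (cases b) auto
  next
    case False
    then obtain y where "y \<in> rchildren R x" "rl y = (st b a, tl v)" using EYn.prems v by auto
    moreover have Ka: "size a < K" using EYn.prems(1) by auto
    ultimately show ?thesis using IH[of _ b a "tl v"] False by simp
  qed
next
  case (ESn a c)
  have K: "size (ESn a c) < K" using ESn.prems(1) by simp
  show ?case
  proof (cases b)
    case True
    then have h: "eval_pbf (atom_holds t R rl x) (tr True c (lab t v) (v = [])) \<or>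
       (v \<noteq> [] \<and> eval_pbf (atom_holds t R rl x) (tr True a (lab t v) (v = [])) \<and>
        (\<exists>y\<in>rchildren R x. rl y = (st True (ESn a c), tl v)))"
      using ESn.prems(2) v by (cases "v = []") auto
    then show ?thesis
    proof
      assume "eval_pbf (atom_holds t R rl x) (tr True c (lab t v) (v = []))"
      then have "sat t v c" using ESn.IH(2)[of True] K by simp
      then show ?thesis using True sat_ES[of t v a c] by blast
    next
      assume h: "v \<noteq> [] \<and> eval_pbf (atom_holds t R rl x) (tr True a (lab t v) (v = [])) \<and>
        (\<exists>y\<in>rchildren R x. rl y = (st True (ESn a c), tl v))"
      then have "sat t v a" using ESn.IH(1)[of True] K by auto
      moreover have "sat t (tl v) (ESn a c)" using h IH[of _ True "ESn a c" "tl v"] K by auto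
      ultimately show ?thesis using True sat_ES[of t v a c] h by blast
    qed
  next
    case False
    then have h: "eval_pbf (atom_holds t R rl x) (tr False c (lab t v) (v = [])) \<and>
       (v \<noteq> [] \<longrightarrow> (eval_pbf (atom_holds t R rl x) (tr False a (lab t v) (v = [])) \<or>
        (\<exists>y\<in>rchildren R x. rl y = (st False (ESn a c), tl v))))"
      using ESn.prems(2) v by (cases "v = []") auto
    then have "\<not> sat t v c" using ESn.IH(2)[of False] K by simp
    moreover have "v \<noteq> [] \<Longrightarrow> \<not> sat t v a \<or> \<not> sat t (tl v) (ESn a c)"
      using h ESn.IH(1)[of False] K IH[of _ False "ESn a c" "tl v"] by auto
    ultimately show ?thesis using False sat_ES[of t v a c] by blast
  qed
  }
qed


lemma drop_in_R: "(\<forall>i x. i # x \<in> R \<longrightarrow> x \<in> R) \<Longrightarrow> x \<in> R \<Longrightarrow> drop k x \<in> R"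
proof (induction k arbitrary: x)
  case 0
  then show ?case by simp
next
  case (Suc k)
  then show ?case
  proof (cases x)
    case Nil
    then show ?thesis using Suc by simp
  next
    case (Cons i x')
    then have "x' \<in> R" using Suc.prems by blast
    then show ?thesis using Suc Cons by simp
  qed
qed

lemma run_paths_acc:
  assumes acc: "accepting A R rl" and cl: "\<forall>i x. i # x \<in> R \<longrightarrow> x \<in> R" and xR: "x \<in> R"
  and p0: "p 0 = x" and ps: "\<forall>n. p (Suc n) \<in> rchildren R (p n)"
  shows "\<exists>\<^sub>\<infinity>n. fst (rl (p n)) \<in> acc A"
proof -
  define L where "L = length x"
  define P where "P n = (if n < L then drop (L - n) x else p (n - L))" for n
  have P0: "P 0 = []" using p0 xR by (auto simp: P_def L_def)
  have PS: "P (Suc n) \<in> rchildren R (P n)" for n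
  proof (cases "Suc n < L")
    case True
    define k where "k = L - Suc n"
    have k: "k < length x" "Suc k = L - n" using True by (auto simp: k_def L_def)
    have "drop k x = x ! k # drop (Suc k) x" using k(1) by (simp add: Cons_nth_drop_Suc)
    moreover have "drop k x \<in> R" using drop_in_R[OF cl xR] by blast
    ultimately show ?thesis using True k by (auto simp: P_def rchildren_def k_def)
  next
    case False
    show ?thesis
    proof (cases "Suc n = L")
      case True
      then have "x = x ! 0 # drop 1 x" by (cases x) (auto simp: L_def)
      then show ?thesis using True xR p0 by (auto simp: P_def rchildren_def)
    next
      case False
      then have "Suc n - L = Suc (n - L)" "\<not> n < L" using \<open>\<not> Suc n < L\<close> by auto
      then show ?thesis using False \<open>\<not> Suc n < L\<close> ps by (simp add: P_def)
    qed
  qed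
  have "\<exists>\<^sub>\<infinity>n. fst (rl (P n)) \<in> acc A"
    using acc P0 PS unfolding accepting_def by blast
  then have h: "\<forall>m. \<exists>n>m. fst (rl (P n)) \<in> acc A" unfolding INFM_nat by blast
  show ?thesis unfolding INFM_nat
  proof
    fix m
    obtain n where "n > m + L" "fst (rl (P n)) \<in> acc A" using h by blast
    then show "\<exists>n>m. fst (rl (p n)) \<in> acc A"
      by (intro exI[of _ "n - L"]) (auto simp: P_def)
  qed
qed

lemma complete:
  fixes \<phi> :: "'ap::countable pctl"
  assumes run: "is_run (Aut \<phi>) t s R rl" and acc: "accepting (Aut \<phi>) R rl"
  shows "\<forall>x\<in>R. \<forall>b (\<psi>::'ap pctl). fst (rl x) = st b \<psi> \<longrightarrow> sat t (snd (rl x)) \<psi> = b"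
proof -
  have cl: "\<forall>i x. i # x \<in> R \<longrightarrow> x \<in> R" using run by (simp add: is_run_def)
  have ev: "\<And>y b \<psi>. y \<in> R \<Longrightarrow> fst (rl y) = st b (\<psi>::'ap pctl) \<Longrightarrow>
     eval_pbf (atom_holds t R rl y) (tr b \<psi> (lab t (snd (rl y))) (snd (rl y) = []))"
    using run by (auto simp: is_run_def Aut_def)
  have rc: "\<And>y y'. y' \<in> rchildren R y \<Longrightarrow> y' \<in> R" by (simp add: rchildren_def)
  have main: "\<forall>x\<in>R. \<forall>b (\<psi>::'ap pctl). fst (rl x) = st b \<psi> \<longrightarrow> size \<psi> = n \<longrightarrow> sat t (snd (rl x)) \<psi> = b" for n
  proof (induction n rule: less_induct)
    case (less n)
    have CT: "\<And>y (\<psi>'::'ap pctl) b'. y \<in> R \<Longrightarrow> (size \<psi>' < n \<or> (\<not> isEU \<psi>' \<and> \<not> isES \<psi>' \<and> size \<psi>' \<le> n)) \<Longrightarrow>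
       eval_pbf (atom_holds t R rl y) (tr b' \<psi>' (lab t (snd (rl y))) (snd (rl y) = [])) \<Longrightarrow>
       sat t (snd (rl y)) \<psi>' = b'"
    proof -
      fix y and \<psi>' :: "'ap pctl" and b'
      assume y: "y \<in> R"
      have IH0: "\<And>y' b'' \<psi>''. y' \<in> rchildren R y \<Longrightarrow> fst (rl y') = st b'' (\<psi>''::'ap pctl) \<Longrightarrow> size \<psi>'' < n
          \<Longrightarrow> sat t (snd (rl y')) \<psi>'' = b''"
        using less.IH rc by blast
      show "(size \<psi>' < n \<or> (\<not> isEU \<psi>' \<and> \<not> isES \<psi>' \<and> size \<psi>' \<le> n)) \<Longrightarrow>
       eval_pbf (atom_holds t R rl y) (tr b' \<psi>' (lab t (snd (rl y))) (snd (rl y) = [])) \<Longrightarrow>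
       sat t (snd (rl y)) \<psi>' = b'"
        by (rule complete_tr[OF IH0 refl])
    qed
    show ?case
    proof (intro ballI allI impI)
      fix x b and \<psi> :: "'ap pctl"
      assume xR: "x \<in> R" and xs: "fst (rl x) = st b \<psi>" and sz: "size \<psi> = n"
      show "sat t (snd (rl x)) \<psi> = b"
      proof (cases "isEU \<psi> \<or> isES \<psi>")
        case False
        then show ?thesis using CT[OF xR] ev[OF xR xs] sz by blast
      next
        case True
        then have "isES \<psi> \<or> isEU \<psi>" by blast
        then show ?thesis
        proof
          assume "isES \<psi>"
          then obtain a c where \<psi>: "\<psi> = ESn a c" by (cases \<psi>) auto
          have ka: "size a < n" "size c < n" using sz \<psi> by auto
          have "\<forall>x\<in>R. fst (rl x) = st b \<psi> \<longrightarrow> length (snd (rl x)) = m \<longrightarrow> sat t (snd (rl x)) \<psi> = b" for m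
          proof (induction m rule: less_induct)
            case (less m)
            show ?case
            proof (intro ballI impI)
              fix x assume xR: "x \<in> R" and xs: "fst (rl x) = st b \<psi>" and lm: "length (snd (rl x)) = m"
              define v where "v = snd (rl x)"
              have e: "eval_pbf (atom_holds t R rl x) (tr b (ESn a c) (lab t v) (v = []))"
                using ev[OF xR xs] \<psi> v_def by simp
              have IHup: "sat t (tl v) \<psi> = b" if y: "y \<in> rchildren R x" "rl y = (st b \<psi>, tl v)" "v \<noteq> []" for y
              proof -
                have yR: "y \<in> R" using rc y(1) by blast
                have ly: "length (snd (rl y)) < m" using lm v_def y(2,3) by (cases v) auto
                have "fst (rl y) = st b \<psi>" using y(2) by simp
                then have "sat t (snd (rl y)) \<psi> = b" using less.IH[OF ly] yR by blast
                then show ?thesis using y(2) by simp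
              qed
              show "sat t (snd (rl x)) \<psi> = b"
              proof (cases b)
                case True
                then have h: "eval_pbf (atom_holds t R rl x) (tr True c (lab t v) (v = [])) \<or>
                   (v \<noteq> [] \<and> eval_pbf (atom_holds t R rl x) (tr True a (lab t v) (v = [])) \<and>
                    (\<exists>y\<in>rchildren R x. rl y = (st True (ESn a c), tl v)))"
                  using e v_def by (cases "v = []") (auto simp: v_def)
                then show ?thesis
                proof
                  assume "eval_pbf (atom_holds t R rl x) (tr True c (lab t v) (v = []))"
                  then have "sat t v c" using CT[OF xR, of c True] ka v_def by simp
                  then show ?thesis unfolding v_def[symmetric] \<psi> using True sat_ES[of t v a c] by blast
                next
                  assume h: "v \<noteq> [] \<and> eval_pbf (atom_holds t R rl x) (tr True a (lab t v) (v = [])) \<and>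
                    (\<exists>y\<in>rchildren R x. rl y = (st True (ESn a c), tl v))"
                  then have "sat t v a" using CT[OF xR, of a True] ka v_def by auto
                  moreover obtain y where "y \<in> rchildren R x" "rl y = (st True (ESn a c), tl v)" using h by blast
                  then have "sat t (tl v) (ESn a c)" using IHup[of y] h \<psi> True by simp
                  ultimately show ?thesis unfolding v_def[symmetric] \<psi> using True sat_ES[of t v a c] h by blast
                qed
              next
                case False
                then have h: "eval_pbf (atom_holds t R rl x) (tr False c (lab t v) (v = [])) \<and>
                   (v \<noteq> [] \<longrightarrow> (eval_pbf (atom_holds t R rl x) (tr False a (lab t v) (v = [])) \<or>
                    (\<exists>y\<in>rchildren R x. rl y = (st False (ESn a c), tl v))))"
                  using e by (cases "v = []") (auto simp: v_def)
                then have "\<not> sat t v c" using CT[OF xR, of c False] ka v_def by simp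
                moreover have "\<not> sat t v a \<or> \<not> sat t (tl v) (ESn a c)" if vn: "v \<noteq> []"
                proof -
                  from h vn have "eval_pbf (atom_holds t R rl x) (tr False a (lab t v) (v = [])) \<or>
                    (\<exists>y\<in>rchildren R x. rl y = (st False (ESn a c), tl v))" by blast
                  then show ?thesis
                  proof
                    assume "eval_pbf (atom_holds t R rl x) (tr False a (lab t v) (v = []))"
                    then have "sat t v a = False" using CT[OF xR, of a False] ka v_def by simp
                    then show ?thesis by simp
                  next
                    assume "\<exists>y\<in>rchildren R x. rl y = (st False (ESn a c), tl v)"
                    then obtain y where "y \<in> rchildren R x" "rl y = (st False (ESn a c), tl v)" by blast
                    then have "sat t (tl v) \<psi> = False" using IHup[of y] vn False \<psi> by simp
                    then show ?thesis using \<psi> by simp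
                  qed
                qed
                ultimately show ?thesis unfolding v_def[symmetric] \<psi> using False sat_ES[of t v a c] by blast
              qed
            qed
          qed
          then show ?thesis using xR xs by blast
        next
          assume "isEU \<psi>"
          then obtain a c where \<psi>: "\<psi> = EUn a c" by (cases \<psi>) auto
          have ka: "size a < n" "size c < n" using sz \<psi> by auto
          show ?thesis
          proof (cases b)
            case False
            have "euj t a c j u \<Longrightarrow> \<forall>x\<in>R. rl x = (st False \<psi>, u) \<longrightarrow> False" for j u
            proof (induction rule: euj.induct)
              case (euj0 u)
              show ?case
              proof (intro ballI impI)
                fix x assume xR: "x \<in> R" and xl: "rl x = (st False \<psi>, u)"
                have "eval_pbf (atom_holds t R rl x) (tr False (EUn a c) (lab t u) (u = []))"
                  using ev[OF xR, of False \<psi>] xl \<psi> by simp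
                then have "eval_pbf (atom_holds t R rl x) (tr False c (lab t u) (u = []))" by simp
                then have "\<not> sat t u c" using CT[OF xR, of c False] ka xl by simp
                then show False using euj0 by simp
              qed
            next
              case (eujS u v' j)
              show ?case
              proof (intro ballI impI)
                fix x assume xR: "x \<in> R" and xl: "rl x = (st False \<psi>, u)"
                have "eval_pbf (atom_holds t R rl x) (tr False (EUn a c) (lab t u) (u = []))"
                  using ev[OF xR, of False \<psi>] xl \<psi> by simp
                then have h: "eval_pbf (atom_holds t R rl x) (tr False a (lab t u) (u = [])) \<or>
                    card {v'' \<in> children t u. \<not> (\<exists>y\<in>rchildren R x. rl y = (st False (EUn a c), v''))} < 1"
                  using xl by simp
                show False
                proof (cases "eval_pbf (atom_holds t R rl x) (tr False a (lab t u) (u = []))")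
                  case True
                  then have "\<not> sat t u a" using CT[OF xR, of a False] ka xl by simp
                  then show False using eujS by simp
                next
                  case False
                  then have "{v'' \<in> children t u. \<not> (\<exists>y\<in>rchildren R x. rl y = (st False (EUn a c), v''))} = {}"
                    using h by (intro card_lt1) auto
                  then obtain y where "y \<in> rchildren R x" "rl y = (st False \<psi>, v')"
                    using eujS.hyps(2) \<psi> by blast
                  then show False using eujS.IH rc by blast
                qed
              qed
            qed
            moreover have "rl x = (st False \<psi>, snd (rl x))" using xs False by (simp add: prod_eq_iff)
            ultimately have "\<not> (\<exists>j. euj t a c j (snd (rl x)))" using xR by blast
            then have "\<not> sat t (snd (rl x)) \<psi>"
              using \<psi> sat_EU by blast
            then show ?thesis using False by simp
          next
            case True
            define Bad where "Bad y \<longleftrightarrow> y \<in> R \<and> fst (rl y) = st True \<psi> \<and> \<not> sat t (snd (rl y)) \<psi>" for y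
            have step: "\<exists>y'. y' \<in> rchildren R y \<and> Bad y'" if hby: "Bad y" for y
            proof -
              have yR: "y \<in> R" and ys: "fst (rl y) = st True \<psi>" and ns: "\<not> sat t (snd (rl y)) \<psi>"
                using hby by (auto simp: Bad_def)
              define u where "u = snd (rl y)"
              have "eval_pbf (atom_holds t R rl y) (tr True (EUn a c) (lab t u) (u = []))"
                using ev[OF yR ys] \<psi> u_def by simp
              then have h: "eval_pbf (atom_holds t R rl y) (tr True c (lab t u) (u = [])) \<or>
                 (eval_pbf (atom_holds t R rl y) (tr True a (lab t u) (u = [])) \<and>
                  (\<exists>S \<subseteq> children t u. card S = 1 \<and> (\<forall>v'\<in>S. \<exists>y'\<in>rchildren R y. rl y' = (st True (EUn a c), v'))))"
                using u_def by simp
              have nc: "\<not> sat t u c" using ns sat_EU_unfold[of t u a c] \<psi> u_def by blast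
              then have "\<not> eval_pbf (atom_holds t R rl y) (tr True c (lab t u) (u = []))"
                using CT[OF yR, of c True] ka u_def by auto
              then obtain S where S: "S \<subseteq> children t u" "card S = 1"
                "\<forall>v'\<in>S. \<exists>y'\<in>rchildren R y. rl y' = (st True (EUn a c), v')"
                and ea: "eval_pbf (atom_holds t R rl y) (tr True a (lab t u) (u = []))" using h by blast
              have sa: "sat t u a" using CT[OF yR, of a True] ea ka u_def by simp
              obtain v' where "S = {v'}" using S(2) by (meson card_1_singletonE)
              then obtain y' where y': "y' \<in> rchildren R y" "rl y' = (st True \<psi>, v')" "v' \<in> children t u"
                using S \<psi> by auto
              have "\<not> sat t v' \<psi>" using ns sa y'(3) sat_EU_unfold[of t u a c] \<psi> u_def by blast
              then have "Bad y'" using y' rc by (simp add: Bad_def)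
              then show ?thesis using y' by blast
            qed
            show ?thesis
            proof (rule ccontr)
              assume "sat t (snd (rl x)) \<psi> \<noteq> b"
              then have bx: "Bad x" using xR xs True by (simp add: Bad_def)
              define nxt where "nxt y = (SOME y'. y' \<in> rchildren R y \<and> Bad y')" for y
              define p where "p n = (nxt ^^ n) x" for n
              have pb: "Bad (p n)" for n
              proof (induction n)
                case 0
                then show ?case using bx by (simp add: p_def)
              next
                case (Suc n)
                have "nxt (p n) \<in> rchildren R (p n) \<and> Bad (nxt (p n))"
                  unfolding nxt_def by (rule someI_ex) (rule step[OF Suc])
                then show ?case by (simp add: p_def)
              qed
              have pc: "p (Suc n) \<in> rchildren R (p n)" for n
              proof -
                have "nxt (p n) \<in> rchildren R (p n) \<and> Bad (nxt (p n))"
                  unfolding nxt_def by (rule someI_ex) (rule step[OF pb])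
                then show ?thesis by (simp add: p_def)
              qed
              have pn: "Bad (p n) \<and> p (Suc n) \<in> rchildren R (p n)" for n
                using pb pc by blast
              have "\<exists>\<^sub>\<infinity>n. fst (rl (p n)) \<in> acc (Aut \<phi>)"
                by (rule run_paths_acc[OF acc cl xR]) (use pn in \<open>auto simp: p_def\<close>)
              then have "\<forall>m. \<exists>n>m. fst (rl (p n)) \<in> acc (Aut \<phi>)" unfolding INFM_nat .
              then obtain n where "fst (rl (p n)) \<in> acc (Aut \<phi>)" by blast
              moreover have "fst (rl (p n)) = st True \<psi>" using pn[of n] by (simp add: Bad_def)
              ultimately show False by (simp add: Aut_def Acc_def)
            qed
          qed
        qed
      qed
    qed
  qed
  show ?thesis using main by blast
qed


definition nbrs :: "'ap tree \<Rightarrow> nat list \<Rightarrow> nat list set" where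
  "nbrs t v = children t v \<union> (if v = [] then {} else {tl v})"

definition good :: "'ap::countable tree \<Rightarrow> 'ap pctl \<Rightarrow> nat \<times> nat list \<Rightarrow> bool" where
  "good t \<phi> c \<longleftrightarrow> in_dom t (snd c) \<and> fst c \<in> Sts \<phi> \<and>
     (case (from_nat (fst c) :: bool \<times> 'ap pctl) of (b, \<psi>) \<Rightarrow> sat t (snd c) \<psi> = b)"

definition rank :: "'ap tree \<Rightarrow> 'ap pctl \<Rightarrow> 'ap pctl \<Rightarrow> nat list \<Rightarrow> nat" where
  "rank t a c v = (LEAST j. euj t a c j v)"

definition selfok :: "'ap::countable tree \<Rightarrow> 'ap pctl \<Rightarrow> nat \<Rightarrow> nat list \<Rightarrow> nat list \<Rightarrow> bool" where
  "selfok t \<phi> q v v' = (case (from_nat q :: bool \<times> 'ap pctl) of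
      (True, EUn a c) \<Rightarrow> v' \<in> children t v \<and> rank t a c v' < rank t a c v
    | (False, EUn a c) \<Rightarrow> v' \<in> children t v
    | (_, ESn a c) \<Rightarrow> v \<noteq> [] \<and> v' = tl v
    | _ \<Rightarrow> False)"

definition Tset :: "'ap::countable tree \<Rightarrow> 'ap pctl \<Rightarrow> nat \<times> nat list \<Rightarrow> (nat \<times> nat list) set" where
  "Tset t \<phi> c = {c'. good t \<phi> c' \<and> ((msz \<phi> (fst c') < msz \<phi> (fst c) \<and> snd c' \<in> nbrs t (snd c)) \<or>
      (fst c' = fst c \<and> selfok t \<phi> (fst c) (snd c) (snd c')))}"

fun hs :: "(nat \<times> nat list) set \<Rightarrow> 'ap tree \<Rightarrow> nat list \<Rightarrow> nat atom \<Rightarrow> bool" where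
  "hs T t v (Dia k q') = (\<exists>S \<subseteq> children t v. card S = k \<and> (\<forall>v'\<in>S. (q', v') \<in> T))"
| "hs T t v (Box k q') = (card {v' \<in> children t v. (q', v') \<notin> T} < k)"
| "hs T t v (Up q') = (v \<noteq> [] \<and> (q', tl v) \<in> T)"

lemma good_st: "good t \<phi> (st b \<psi>, v) \<longleftrightarrow> in_dom t v \<and> \<psi> \<in> subs \<phi> \<and> sat t v \<psi> = b"
  by (simp add: good_def)

lemma msz_st[simp]: "msz (\<phi>::'ap::countable pctl) (st b (\<psi>::'ap pctl)) = size \<psi>"
  by (simp add: msz_def)

lemma in_dom_child: "v' \<in> children t v \<Longrightarrow> in_dom t v \<Longrightarrow> in_dom t v'"
  by (auto simp: children_def)

lemma in_dom_tl: "in_dom t v \<Longrightarrow> in_dom t (tl v)"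
  by (cases v) auto

lemma sub_sub: "\<psi> \<in> subs \<phi> \<Longrightarrow> \<psi>' \<in> subs \<psi> \<Longrightarrow> \<psi>' \<in> subs \<phi>"
  by (rule subs_trans)

lemma sound_tr:
  fixes \<psi> \<psi>0 \<phi> :: "'ap::countable pctl" and b0 :: bool and t :: "'ap tree" and v :: "nat list"
  assumes dom: "in_dom t v"
  defines "T \<equiv> Tset t \<phi> (st b0 \<psi>0, v)"
  shows "\<psi> \<in> subs \<phi> \<Longrightarrow> (size \<psi> < size \<psi>0 \<or> (b = b0 \<and> \<psi> = \<psi>0)) \<Longrightarrow> sat t v \<psi> = b \<Longrightarrow>
     eval_pbf (hs T t v) (tr b \<psi> (lab t v) (v = []))"
proof (induction \<psi> arbitrary: b)
  have memT: "\<And>b' \<psi>' v'. in_dom t v' \<Longrightarrow> \<psi>' \<in> subs \<phi> \<Longrightarrow> sat t v' \<psi>' = b' \<Longrightarrow> size \<psi>' < size \<psi>0 \<Longrightarrow>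
      v' \<in> nbrs t v \<Longrightarrow> (st b' \<psi>', v') \<in> T"
    by (simp add: T_def Tset_def good_st)
  have memS: "\<And>v'. in_dom t v' \<Longrightarrow> \<psi>0 \<in> subs \<phi> \<Longrightarrow> sat t v' \<psi>0 = b0 \<Longrightarrow>
      selfok t \<phi> (st b0 \<psi>0) v v' \<Longrightarrow> (st b0 \<psi>0, v') \<in> T"
    by (simp add: T_def Tset_def good_st)
  have chn: "\<And>v'. v' \<in> children t v \<Longrightarrow> v' \<in> nbrs t v" by (simp add: nbrs_def)
  have tln: "v \<noteq> [] \<Longrightarrow> tl v \<in> nbrs t v" by (simp add: nbrs_def)
  have chd: "\<And>v'. v' \<in> children t v \<Longrightarrow> in_dom t v'" using in_dom_child dom by blast
  have tld: "in_dom t (tl v)" using in_dom_tl dom by blast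
  {
  case (Atom p)
  then show ?case by simp
next
  case (Neg a)
  have "a \<in> subs \<phi>" using Neg.prems(1) sub_sub[of "Neg a" \<phi> a] by simp
  moreover have "size a < size \<psi>0" using Neg.prems(2) by auto
  ultimately show ?case using Neg.IH[of "\<not> b"] Neg.prems(3) by (cases b) auto
next
  case (Or a c)
  have "a \<in> subs \<phi>" "c \<in> subs \<phi>" using Or.prems(1) sub_sub[of "Or a c" \<phi>] by auto
  moreover have "size a < size \<psi>0" "size c < size \<psi>0" using Or.prems(2) by auto
  ultimately show ?case using Or.IH(1)[of b] Or.IH(2)[of b] Or.prems(3) Or.IH(1)[of False] Or.IH(2)[of False]
    by (cases b) auto
next
  case (Dn n a)
  have sa: "a \<in> subs \<phi>" using Dn.prems(1) sub_sub[of "Dn n a" \<phi> a] by simp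
  have ka: "size a < size \<psi>0" using Dn.prems(2) by auto
  show ?case
  proof (cases b)
    case True
    then have "n \<le> card {c \<in> children t v. sat t c a}" using Dn.prems(3) by simp
    then obtain S where S: "S \<subseteq> {c \<in> children t v. sat t c a}" "card S = n"
      by (meson obtain_subset_with_card_n)
    have "\<forall>v'\<in>S. (st True a, v') \<in> T"
      using S(1) memT[OF _ sa _ ka] chd chn by auto
    then show ?thesis using True S by auto
  next
    case False
    then have c: "card {c \<in> children t v. sat t c a} < n" using Dn.prems(3) by simp
    have "{v' \<in> children t v. (st False a, v') \<notin> T} \<subseteq> {c \<in> children t v. sat t c a}"
    proof
      fix x assume x: "x \<in> {v' \<in> children t v. (st False a, v') \<notin> T}"
      then have xc: "x \<in> children t v" by blast
      have "sat t x a"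
      proof (rule ccontr)
        assume "\<not> sat t x a"
        then have "(st False a, x) \<in> T" using memT[OF chd[OF xc] sa _ ka chn[OF xc]] by simp
        then show False using x by blast
      qed
      then show "x \<in> {c \<in> children t v. sat t c a}" using xc by blast
    qed
    then have "card {v' \<in> children t v. (st False a, v') \<notin> T} \<le> card {c \<in> children t v. sat t c a}"
      by (intro card_mono) (rule finite_subset[OF _ finite_children[of t v]], blast)
    then show ?thesis using False c by simp
  qed
next
  case (EXn a)
  have sa: "a \<in> subs \<phi>" using EXn.prems(1) sub_sub[of "EXn a" \<phi> a] by simp
  have ka: "size a < size \<psi>0" using EXn.prems(2) by auto
  show ?case
  proof (cases b)
    case True
    then obtain v' where v': "v' \<in> children t v" "sat t v' a" using EXn.prems(3) by auto
    have "(st True a, v') \<in> T" using v' memT[OF _ sa _ ka] chd chn by auto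
    then show ?thesis using True v' by (auto intro!: exI[of _ "{v'}"])
  next
    case False
    have "(st False a, x) \<in> T" if xc: "x \<in> children t v" for x
    proof -
      have "\<not> sat t x a" using EXn.prems(3) False xc by auto
      then show ?thesis using memT[OF chd[OF xc] sa _ ka chn[OF xc]] by simp
    qed
    then have "{v' \<in> children t v. (st False a, v') \<notin> T} = {}" by blast
    then show ?thesis using False by simp
  qed
next
  case (EYn a)
  have sa: "a \<in> subs \<phi>" using EYn.prems(1) sub_sub[of "EYn a" \<phi> a] by simp
  have ka: "size a < size \<psi>0" using EYn.prems(2) by auto
  show ?case
  proof (cases "v = []")
    case True
    then show ?thesis using EYn.prems(3) by (cases b) auto
  next
    case False
    have "(st b a, tl v) \<in> T" using memT[OF tld sa _ ka tln[OF False]] EYn.prems(3) False by simp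
    then show ?thesis using False by simp
  qed
next
  case (EUn a c)
  have sa: "a \<in> subs \<phi>" "c \<in> subs \<phi>" and se: "EUn a c \<in> subs \<phi>"
    using EUn.prems(1) sub_sub[of "EUn a c" \<phi>] by auto
  have ka: "size a < size \<psi>0" "size c < size \<psi>0" using EUn.prems(2) by auto
  show ?case
  proof (cases b)
    case True
    then have eu: "sat t v (EUn a c)" using EUn.prems(3) by simp
    show ?thesis
    proof (cases "sat t v c")
      case True
      then show ?thesis using EUn.IH(2)[of True] sa ka \<open>b\<close> by simp
    next
      case False
      obtain j where "euj t a c j v" using eu sat_EU by blast
      then have r: "euj t a c (rank t a c v) v" unfolding rank_def by (rule LeastI)
      then obtain j' v' where j': "rank t a c v = Suc j'" "sat t v a" "v' \<in> children t v" "euj t a c j' v'"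
        using False by (cases rule: euj.cases) auto
      have rk: "rank t a c v' < rank t a c v"
        using j' Least_le[of "\<lambda>j. euj t a c j v'" j'] unfolding rank_def by simp
      have ev': "sat t v' (EUn a c)" using j'(4) sat_EU by blast
      have mem: "(st True (EUn a c), v') \<in> T"
      proof (cases "size (EUn a c) < size \<psi>0")
        case True
        then show ?thesis using memT[of v' "EUn a c" True] chd[OF j'(3)] se ev' chn[OF j'(3)] by simp
      next
        case False
        then have "b0 = True" "\<psi>0 = EUn a c" using EUn.prems(2) \<open>b\<close> by auto
        moreover have "selfok t \<phi> (st True (EUn a c)) v v'" using j'(3) rk by (simp add: selfok_def)
        ultimately show ?thesis using memS[OF chd[OF j'(3)]] se ev' by simp
      qed
      have "eval_pbf (hs T t v) (tr True a (lab t v) (v = []))" using EUn.IH(1)[of True] sa ka j'(2) by simp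
      then show ?thesis using True mem j'(3) by (auto intro!: exI[of _ "{v'}"])
    qed
  next
    case False
    then have neu: "\<not> sat t v (EUn a c)" using EUn.prems(3) by simp
    then have nc: "\<not> sat t v c" and na: "\<not> sat t v a \<or> (\<forall>v'\<in>children t v. \<not> sat t v' (EUn a c))"
      using sat_EU_unfold[of t v a c] by blast+
    have e1: "eval_pbf (hs T t v) (tr False c (lab t v) (v = []))" using EUn.IH(2)[of False] sa ka nc by simp
    show ?thesis
    proof (cases "sat t v a")
      case False
      then show ?thesis using EUn.IH(1)[of False] sa ka e1 \<open>\<not> b\<close> by simp
    next
      case True
      then have all: "\<forall>v'\<in>children t v. \<not> sat t v' (EUn a c)" using na by blast
      have "(st False (EUn a c), v') \<in> T" if v': "v' \<in> children t v" for v'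
      proof (cases "size (EUn a c) < size \<psi>0")
        case True
        then show ?thesis using memT[of v' "EUn a c" False] chd[OF v'] se chn[OF v'] all v' by simp
      next
        case False
        then have "b0 = False" "\<psi>0 = EUn a c" using EUn.prems(2) \<open>\<not> b\<close> by auto
        moreover have "selfok t \<phi> (st False (EUn a c)) v v'" using v' by (simp add: selfok_def)
        ultimately show ?thesis using memS[OF chd[OF v']] se all v' by simp
      qed
      then have "{v' \<in> children t v. (st False (EUn a c), v') \<notin> T} = {}" by blast
      then show ?thesis using e1 \<open>\<not> b\<close> by simp
    qed
  qed
next
  case (ESn a c)
  have sa: "a \<in> subs \<phi>" "c \<in> subs \<phi>" and se: "ESn a c \<in> subs \<phi>"
    using ESn.prems(1) sub_sub[of "ESn a c" \<phi>] by auto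
  have ka: "size a < size \<psi>0" "size c < size \<psi>0" using ESn.prems(2) by auto
  have mem: "(st b (ESn a c), tl v) \<in> T" if vn: "v \<noteq> []" and es: "sat t (tl v) (ESn a c) = b"
  proof (cases "size (ESn a c) < size \<psi>0")
    case True
    then show ?thesis using memT[of "tl v" "ESn a c" b] tld se es tln[OF vn] by simp
  next
    case False
    then have "b0 = b" "\<psi>0 = ESn a c" using ESn.prems(2) by auto
    moreover have "selfok t \<phi> (st b (ESn a c)) v (tl v)" using vn by (cases b) (simp_all add: selfok_def)
    ultimately show ?thesis using memS[OF tld] se es by simp
  qed
  show ?case
  proof (cases b)
    case True
    then have es: "sat t v (ESn a c)" using ESn.prems(3) by simp
    show ?thesis
    proof (cases "sat t v c")
      case True
      then show ?thesis using ESn.IH(2)[of True] sa ka \<open>b\<close> by simp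
    next
      case False
      then have h: "v \<noteq> []" "sat t v a" "sat t (tl v) (ESn a c)" using es sat_ES[of t v a c] by blast+
      have "eval_pbf (hs T t v) (tr True a (lab t v) (v = []))" using ESn.IH(1)[of True] sa ka h by simp
      then show ?thesis using True mem[OF h(1)] h by simp
    qed
  next
    case False
    then have nes: "\<not> sat t v (ESn a c)" using ESn.prems(3) by simp
    then have nc: "\<not> sat t v c" and na: "v \<noteq> [] \<Longrightarrow> \<not> sat t v a \<or> \<not> sat t (tl v) (ESn a c)"
      using sat_ES[of t v a c] by blast+
    have e1: "eval_pbf (hs T t v) (tr False c (lab t v) (v = []))" using ESn.IH(2)[of False] sa ka nc by simp
    show ?thesis
    proof (cases "v = []")
      case True
      then show ?thesis using e1 False by simp
    next
      case vn: False
      show ?thesis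
      proof (cases "sat t v a")
        case True
        then have "\<not> sat t (tl v) (ESn a c)" using na vn by blast
        then show ?thesis using e1 False vn mem[OF vn] by simp
      next
        case na': False
        then show ?thesis using ESn.IH(1)[of False] sa ka e1 False vn by simp
      qed
    qed
  qed
  }
qed


lemma selfok_nbrs: "selfok t (\<phi>::'ap::countable pctl) q v v' \<Longrightarrow> v' \<in> nbrs t v"
  unfolding selfok_def nbrs_def
  by (auto split: prod.splits bool.splits pctl.splits)

lemma finite_Tset: "finite (Tset t \<phi> c)"
proof (rule finite_subset)
  show "Tset t \<phi> c \<subseteq> Sts \<phi> \<times> nbrs t (snd c)"
    using selfok_nbrs by (fastforce simp: Tset_def good_def)
  show "finite (Sts \<phi> \<times> nbrs t (snd c))" by (simp add: nbrs_def)
qed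

definition succs :: "'ap::countable tree \<Rightarrow> 'ap pctl \<Rightarrow> nat \<times> nat list \<Rightarrow> (nat \<times> nat list) list" where
  "succs t \<phi> c = (SOME xs. set xs = Tset t \<phi> c)"

lemma set_succs: "set (succs t \<phi> c) = Tset t \<phi> c"
  unfolding succs_def by (rule someI_ex) (rule finite_list[OF finite_Tset])

fun rlab :: "'ap::countable tree \<Rightarrow> 'ap pctl \<Rightarrow> nat list \<Rightarrow> nat \<times> nat list" where
  "rlab t \<phi> [] = (st True \<phi>, [])"
| "rlab t \<phi> (i # x) = succs t \<phi> (rlab t \<phi> x) ! i"

fun valid :: "'ap::countable tree \<Rightarrow> 'ap pctl \<Rightarrow> nat list \<Rightarrow> bool" where
  "valid t \<phi> [] = True"
| "valid t \<phi> (i # x) = (valid t \<phi> x \<and> i < length (succs t \<phi> (rlab t \<phi> x)))"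

lemma valid_good: "sat t [] \<phi> \<Longrightarrow> valid t \<phi> x \<Longrightarrow> good t \<phi> (rlab t \<phi> x)"
proof (induction x)
  case Nil
  then show ?case by (simp add: good_st)
next
  case (Cons i x)
  then have "rlab t \<phi> (i # x) \<in> set (succs t \<phi> (rlab t \<phi> x))" by simp
  then show ?case by (simp add: set_succs Tset_def)
qed

lemma eval_mono: "(\<And>a. I a \<Longrightarrow> J a) \<Longrightarrow> eval_pbf I f \<Longrightarrow> eval_pbf J f"
  by (induction f) auto

lemma nodesc: "\<forall>n\<ge>N. f (Suc n) < (f n :: nat) \<Longrightarrow> False"
proof -
  assume h: "\<forall>n\<ge>N. f (Suc n) < (f n :: nat)"
  have "f (N + k) + k \<le> f N" for k
  proof (induction k)
    case 0 then show ?case by simp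
  next
    case (Suc k)
    have "f (Suc (N + k)) < f (N + k)" using h by simp
    then show ?case using Suc by simp
  qed
  from this[of "Suc (f N)"] show False by simp
qed

lemma selfok_other: "\<not> isEU \<psi> \<Longrightarrow> \<not> isES \<psi> \<Longrightarrow> \<not> selfok t (\<phi>::'ap::countable pctl) (st b (\<psi>::'ap pctl)) v v'"
  by (cases \<psi>; cases b) (simp_all add: selfok_def)

lemma acc_seq:
  fixes \<phi> :: "'ap::countable pctl"
  assumes cs: "\<forall>n. c (Suc n) \<in> Tset t \<phi> (c n)"
  shows "\<exists>\<^sub>\<infinity>n. fst (c n) \<in> Acc \<phi>"
proof -
  define m where "m n = msz \<phi> (fst (c n))" for n
  have dec: "m (Suc n) \<le> m n" for n using cs[rule_format, of n] by (auto simp: Tset_def m_def)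
  have decle: "m n \<le> m N" if "N \<le> n" for N n
    using that
  proof (induction n rule: dec_induct)
    case base then show ?case by simp
  next
    case (step n) then show ?case using dec[of n] by simp
  qed
  define k where "k = (LEAST k. \<exists>n. m n = k)"
  have "\<exists>n. m n = k" unfolding k_def by (rule LeastI_ex) blast
  then obtain N where mN: "m N = k" by blast
  have kle: "k \<le> m n" for n unfolding k_def by (rule Least_le) blast
  have eqm: "m n = m N" if "N \<le> n" for n using decle[OF that] kle[of n] mN by simp
  have stp: "fst (c (Suc n)) = fst (c n) \<and> selfok t \<phi> (fst (c n)) (snd (c n)) (snd (c (Suc n)))" if "N \<le> n" for n
  proof -
    have "m (Suc n) = m n" using eqm[OF that] eqm[of "Suc n"] that by simp
    then show ?thesis using cs[rule_format, of n] by (auto simp: Tset_def m_def)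
  qed
  have constq: "fst (c n) = fst (c N)" if "N \<le> n" for n
    using that
  proof (induction n rule: dec_induct)
    case base then show ?case by simp
  next
    case (step n) then show ?case using stp[of n] by simp
  qed
  define q where "q = fst (c N)"
  have "good t \<phi> (c (Suc N))" using cs by (simp add: Tset_def)
  then have "q \<in> Sts \<phi>" using constq[of "Suc N"] by (simp add: good_def q_def)
  then obtain b \<psi> where q: "q = st b \<psi>" "\<psi> \<in> subs \<phi>" using Sts_dec by blast
  have sel: "\<forall>n\<ge>N. selfok t \<phi> (st b \<psi>) (snd (c n)) (snd (c (Suc n)))"
    using stp constq q(1) q_def by metis
  have sel0: "selfok t \<phi> (st b \<psi>) (snd (c N)) (snd (c (Suc N)))" using sel by simp
  have ee: "isEU \<psi> \<or> isES \<psi>" using sel0 selfok_other by blast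
  show ?thesis
  proof (cases \<psi>)
    case (EUn a c')
    show ?thesis
    proof (cases b)
      case True
      have "\<forall>n\<ge>N. rank t a c' (snd (c (Suc n))) < rank t a c' (snd (c n))"
        using sel EUn True by (simp add: selfok_def)
      then have False using nodesc[of N "\<lambda>n. rank t a c' (snd (c n))"] by simp
      then show ?thesis ..
    next
      case False
      have qa: "q \<in> Acc \<phi>" using q EUn False \<open>q \<in> Sts \<phi>\<close> by (simp add: Acc_def)
      show ?thesis unfolding INFM_nat
      proof
        fix m0
        have "fst (c (m0 + N + 1)) \<in> Acc \<phi>" using constq[of "m0 + N + 1"] qa q_def by simp
        then show "\<exists>n>m0. fst (c n) \<in> Acc \<phi>" by (intro exI[of _ "m0 + N + 1"]) simp
      qed
    qed
  next
    case (ESn a c')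
    have "\<forall>n\<ge>N. length (snd (c (Suc n))) < length (snd (c n))"
      using sel ESn by (cases b) (auto simp: selfok_def)
    then have False using nodesc[of N "\<lambda>n. length (snd (c n))"] by simp
    then show ?thesis ..
  qed (use ee in \<open>auto\<close>)
qed

lemma sound_run:
  fixes \<phi> :: "'ap::countable pctl"
  assumes s: "sat t [] \<phi>"
  shows "is_run (Aut \<phi>) t [] {x. valid t \<phi> x} (rlab t \<phi>) \<and> accepting (Aut \<phi>) {x. valid t \<phi> x} (rlab t \<phi>)"
proof
  define R where "R = {x. valid t \<phi> x}"
  have ych: "\<exists>y\<in>rchildren R x. rlab t \<phi> y = c'" if v1: "valid t \<phi> x" and v2: "c' \<in> Tset t \<phi> (rlab t \<phi> x)" for x c'
  proof -
    obtain i where "i < length (succs t \<phi> (rlab t \<phi> x))" "succs t \<phi> (rlab t \<phi> x) ! i = c'"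
      using v2 set_succs by (metis in_set_conv_nth)
    then show ?thesis using v1 by (intro bexI[of _ "i # x"]) (auto simp: R_def rchildren_def)
  qed
  show "is_run (Aut \<phi>) t [] {x. valid t \<phi> x} (rlab t \<phi>)"
    unfolding is_run_def R_def[symmetric]
  proof (intro conjI allI impI ballI)
    show "[] \<in> R" by (simp add: R_def)
    show "\<And>i x. i # x \<in> R \<Longrightarrow> x \<in> R" by (simp add: R_def)
    show "rlab t \<phi> [] = (init (Aut \<phi>), [])" by (simp add: Aut_def)
  next
    fix x assume xR: "x \<in> R"
    then have vx: "valid t \<phi> x" by (simp add: R_def)
    have g: "good t \<phi> (rlab t \<phi> x)" using valid_good[OF s vx] .
    then obtain b0 \<psi>0 where c: "fst (rlab t \<phi> x) = st b0 \<psi>0" "\<psi>0 \<in> subs \<phi>"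
      using Sts_dec by (metis good_def)
    define v where "v = snd (rlab t \<phi> x)"
    have rx: "rlab t \<phi> x = (st b0 \<psi>0, v)" using c v_def by (metis prod.collapse)
    have gg: "in_dom t v" "sat t v \<psi>0 = b0" using g rx by (simp_all add: good_st)
    show "fst (rlab t \<phi> x) \<in> states (Aut \<phi>)" using c by (simp add: Aut_def)
    show "in_dom t (snd (rlab t \<phi> x))" using gg rx by simp
    have e: "eval_pbf (hs (Tset t \<phi> (st b0 \<psi>0, v)) t v) (tr b0 \<psi>0 (lab t v) (v = []))"
      using sound_tr[OF gg(1) c(2) _ gg(2)] by simp
    have mono: "atom_holds t R (rlab t \<phi>) x a" if h: "hs (Tset t \<phi> (st b0 \<psi>0, v)) t v a" for a
    proof (cases a)
      case (Dia k q')
      then show ?thesis using h ych[OF vx] rx by auto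
    next
      case (Box k q')
      have "{v' \<in> children t v. \<not> (\<exists>y\<in>rchildren R x. rlab t \<phi> y = (q', v'))}
          \<subseteq> {v' \<in> children t v. (q', v') \<notin> Tset t \<phi> (st b0 \<psi>0, v)}"
        using ych[OF vx] rx by auto
      moreover have "finite {v' \<in> children t v. (q', v') \<notin> Tset t \<phi> (st b0 \<psi>0, v)}" by simp
      ultimately have "card {v' \<in> children t v. \<not> (\<exists>y\<in>rchildren R x. rlab t \<phi> y = (q', v'))}
          \<le> card {v' \<in> children t v. (q', v') \<notin> Tset t \<phi> (st b0 \<psi>0, v)}"
        by (rule card_mono[rotated])
      then show ?thesis using h Box rx by simp
    next
      case (Up q')
      then show ?thesis using h ych[OF vx] rx by auto
    qed
    show "eval_pbf (atom_holds t R (rlab t \<phi>) x)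
         (delta (Aut \<phi>) (fst (rlab t \<phi> x)) (lab t (snd (rlab t \<phi> x))) (snd (rlab t \<phi> x) = []))"
      using eval_mono[OF mono e] rx by (simp add: Aut_def)
  qed
  show "accepting (Aut \<phi>) {x. valid t \<phi> x} (rlab t \<phi>)"
    unfolding accepting_def
  proof (intro allI impI)
    fix p :: "nat \<Rightarrow> nat list"
    assume p: "p 0 = [] \<and> (\<forall>n. p (Suc n) \<in> rchildren {x. valid t \<phi> x} (p n))"
    have cs: "\<forall>n. rlab t \<phi> (p (Suc n)) \<in> Tset t \<phi> (rlab t \<phi> (p n))"
    proof
      fix n
      have "p (Suc n) \<in> rchildren {x. valid t \<phi> x} (p n)" using p by blast
      then obtain i where i: "p (Suc n) = i # p n" "valid t \<phi> (p (Suc n))"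
        unfolding rchildren_def by blast
      then have "rlab t \<phi> (p (Suc n)) \<in> set (succs t \<phi> (rlab t \<phi> (p n)))" by simp
      then show "rlab t \<phi> (p (Suc n)) \<in> Tset t \<phi> (rlab t \<phi> (p n))" by (simp add: set_succs)
    qed
    show "\<exists>\<^sub>\<infinity>n. fst (rlab t \<phi> (p n)) \<in> acc (Aut \<phi>)"
      using acc_seq[of "\<lambda>n. rlab t \<phi> (p n)", OF cs] by (simp add: Aut_def)
  qed
qed

theorem theorem5p2:
  fixes \<phi> :: "('ap::finite) pctl"
  shows "\<exists>A :: 'ap hta. hta_wf A \<and> linear_hesitant A \<and> hta_lang A = ctl_lang \<phi>"
proof (intro exI[of _ "Aut \<phi>"] conjI hta_wf_Aut hes)
  show "hta_lang (Aut \<phi>) = ctl_lang \<phi>"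
  proof (intro set_eqI iffI)
    fix t assume "t \<in> hta_lang (Aut \<phi>)"
    then obtain R rl where t: "is_tree t" "is_run (Aut \<phi>) t [] R rl" "accepting (Aut \<phi>) R rl"
      by (auto simp: hta_lang_def)
    have "[] \<in> R" "rl [] = (st True \<phi>, [])" using t(2) by (auto simp: is_run_def Aut_def)
    then have "sat t [] \<phi> = True" using complete[OF t(2,3)] by fastforce
    then show "t \<in> ctl_lang \<phi>" using t(1) by (simp add: ctl_lang_def)
  next
    fix t assume "t \<in> ctl_lang \<phi>"
    then have "is_tree t" "sat t [] \<phi>" by (auto simp: ctl_lang_def)
    then show "t \<in> hta_lang (Aut \<phi>)" using sound_run[of t \<phi>] by (auto simp: hta_lang_def)
  qed
qed

end
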